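(* Let $t\ge 3$ be an integer, let $G$ be a graph not containing $K_{3,t}$ as a subgraph, let $D$ be a minimum dominating set of $G$ with $\gamma=|D|$, and let $\nabla$ be an integer with $\nabla>\nabla_1^B(G)$. Define $D_1=\{v\in V(G):$ for all $A\subseteq V(G)\setminus\{v\}$ with $N(v)\subseteq N[A]$ we have $|A|>2\nabla-1\}$, $R_1=V(G)\setminus N[D_1]$, $N_{R_1}(v)=N(v)\cap R_1$, $B_v=\{z\in V(G)\setminus\{v\}: |N_{R_1}(v)\cap N_{R_1}(z)|\ge(2\nabla-1)t+1\}$ for $v\in V(G)$, $W=\{v\in V(G): B_v\neq\emptyset\}$, and $D_2=\bigcup_{v\in W}(\{v\}\cup B_v)$. Let $\eta\in[0,1]$ be such that $|(D_1\cup D_2)\cap D|=\eta\gamma$. Then $|D_1\cup D_2|<\rho(G)\gamma+2\nabla\eta\gamma$.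
   Context: Graphs are finite, undirected and simple. $N(v)$ is the open neighbourhood of $v$, $N[v]=N(v)\cup\{v\}$, $N[A]=\bigcup_{a\in A}N[a]$. A dominating set is a set $D$ with $N[D]=V(G)$. A $1$-shallow minor of $G$ is a graph obtained from $G$ by deleting vertices and edges and contracting pairwise vertex-disjoint connected subgraphs of radius at most $1$; $\nabla_1^B(G)$ is the maximum edge density $|E(H)|/|V(H)|$ of a bipartite $1$-shallow minor $H$ of $G$. The Hall ratio $\rho(G)$ is $\max\{|V(H)|/\alpha(H): H\subseteq G\}$ with $\alpha(H)$ the independence number. $K_{3,t}$ is the complete bipartite graph with parts of sizes $3$ and $t$. *)

theory Defs
  imports Complex_Main "HOL-Library.Disjoint_Sets"
begin

definition simple_graph :: "'a set \<Rightarrow> ('a \<Rightarrow> 'a \<Rightarrow> bool) \<Rightarrow> bool" where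
  "simple_graph V E \<longleftrightarrow> finite V \<and>
     (\<forall>x y. E x y \<longrightarrow> x \<in> V \<and> y \<in> V \<and> x \<noteq> y \<and> E y x)"

definition nbhd :: "'a set \<Rightarrow> ('a \<Rightarrow> 'a \<Rightarrow> bool) \<Rightarrow> 'a \<Rightarrow> 'a set" where
  "nbhd V E v = {u \<in> V. E v u}"

definition cnbhd :: "'a set \<Rightarrow> ('a \<Rightarrow> 'a \<Rightarrow> bool) \<Rightarrow> 'a \<Rightarrow> 'a set" where
  "cnbhd V E v = insert v (nbhd V E v)"

definition cnbhd_set :: "'a set \<Rightarrow> ('a \<Rightarrow> 'a \<Rightarrow> bool) \<Rightarrow> 'a set \<Rightarrow> 'a set" where
  "cnbhd_set V E A = (\<Union>a\<in>A. cnbhd V E a)"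

definition dominating_set :: "'a set \<Rightarrow> ('a \<Rightarrow> 'a \<Rightarrow> bool) \<Rightarrow> 'a set \<Rightarrow> bool" where
  "dominating_set V E D \<longleftrightarrow> D \<subseteq> V \<and> cnbhd_set V E D = V"

definition min_dominating_set :: "'a set \<Rightarrow> ('a \<Rightarrow> 'a \<Rightarrow> bool) \<Rightarrow> 'a set \<Rightarrow> bool" where
  "min_dominating_set V E D \<longleftrightarrow> dominating_set V E D \<and>
     (\<forall>D'. dominating_set V E D' \<longrightarrow> card D \<le> card D')"

definition edges :: "'a set \<Rightarrow> ('a \<Rightarrow> 'a \<Rightarrow> bool) \<Rightarrow> 'a set set" where
  "edges V E = {{x, y} | x y. x \<in> V \<and> y \<in> V \<and> E x y}"

definition independent :: "'a set \<Rightarrow> ('a \<Rightarrow> 'a \<Rightarrow> bool) \<Rightarrow> 'a set \<Rightarrow> bool" where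
  "independent V E I \<longleftrightarrow> I \<subseteq> V \<and> (\<forall>x\<in>I. \<forall>y\<in>I. \<not> E x y)"

definition alpha :: "'a set \<Rightarrow> ('a \<Rightarrow> 'a \<Rightarrow> bool) \<Rightarrow> nat" where
  "alpha V E = Max {card I | I. independent V E I}"

definition subgraph :: "'a set \<Rightarrow> ('a \<Rightarrow> 'a \<Rightarrow> bool) \<Rightarrow> 'a set \<Rightarrow> ('a \<Rightarrow> 'a \<Rightarrow> bool) \<Rightarrow> bool" where
  "subgraph H EH V E \<longleftrightarrow> simple_graph H EH \<and> H \<subseteq> V \<and> (\<forall>x y. EH x y \<longrightarrow> E x y)"

definition hall_ratio :: "'a set \<Rightarrow> ('a \<Rightarrow> 'a \<Rightarrow> bool) \<Rightarrow> real" where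
  "hall_ratio V E = Max {real (card H) / real (alpha H EH) | H EH.
       subgraph H EH V E \<and> H \<noteq> {}}"

text \<open>The vertices of the minor are identified with their
branch sets: pairwise disjoint nonempty subsets S of V, each inducing a connected
subgraph of radius at most 1 (i.e. some c in S is adjacent to all other
vertices of S); an edge of the minor between S and T requires a G-edge between
S and T (deleting vertices/edges allows any subset of such edges).\<close>
definition shallow1_minor ::
  "'a set \<Rightarrow> ('a \<Rightarrow> 'a \<Rightarrow> bool) \<Rightarrow> 'a set set \<Rightarrow> ('a set \<Rightarrow> 'a set \<Rightarrow> bool) \<Rightarrow> bool" where
  "shallow1_minor V E VH EH \<longleftrightarrow> simple_graph VH EH \<and>
     disjoint VH \<and>
     (\<forall>S\<in>VH. S \<noteq> {} \<and> S \<subseteq> V \<and> (\<exists>c\<in>S. S \<subseteq> cnbhd V E c)) \<and>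
     (\<forall>S T. EH S T \<longrightarrow> (\<exists>x\<in>S. \<exists>y\<in>T. E x y))"

definition bipartite :: "'b set \<Rightarrow> ('b \<Rightarrow> 'b \<Rightarrow> bool) \<Rightarrow> bool" where
  "bipartite V E \<longleftrightarrow> (\<exists>X. X \<subseteq> V \<and> (\<forall>x y. E x y \<longrightarrow> (x \<in> X \<longleftrightarrow> y \<notin> X)))"

definition nabla1B :: "'a set \<Rightarrow> ('a \<Rightarrow> 'a \<Rightarrow> bool) \<Rightarrow> real" where
  "nabla1B V E = Max {real (card (edges VH EH)) / real (card VH) | VH EH.
       shallow1_minor V E VH EH \<and> bipartite VH EH \<and> VH \<noteq> {}}"

definition contains_K3t :: "'a set \<Rightarrow> ('a \<Rightarrow> 'a \<Rightarrow> bool) \<Rightarrow> nat \<Rightarrow> bool" where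
  "contains_K3t V E t \<longleftrightarrow> (\<exists>A B. A \<subseteq> V \<and> B \<subseteq> V \<and> A \<inter> B = {} \<and>
       card A = 3 \<and> card B = t \<and> (\<forall>a\<in>A. \<forall>b\<in>B. E a b))"

end

theory Submission
  imports Defs
begin

lemma nabla_ge:
  assumes fV: "finite V" and m: "shallow1_minor V E VH EH" "bipartite VH EH" "VH \<noteq> {}"
  shows "real (card (edges VH EH)) / real (card VH) \<le> nabla1B V E"
proof -
  let ?M = "2^2^card V :: nat"
  let ?S = "{real (card (edges VH EH)) / real (card VH) | VH EH.
       shallow1_minor V E VH EH \<and> bipartite VH EH \<and> VH \<noteq> {}}"
  have "?S \<subseteq> (\<lambda>(p,q). real p / real q) ` ({..?M} \<times> {..?M})"
  proof
    fix x assume "x \<in> ?S"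
    then obtain VH EH where x: "x = real (card (edges VH EH)) / real (card VH)"
      and sm: "shallow1_minor V E VH EH" by blast
    have VHs: "VH \<subseteq> Pow V" using sm unfolding shallow1_minor_def by blast
    have Es: "edges VH EH \<subseteq> Pow (Pow V)" using VHs unfolding edges_def by blast
    have c1: "card (edges VH EH) \<le> ?M"
      using card_mono[OF _ Es] fV by (simp add: card_Pow)
    have "card VH \<le> 2^card V"
      using card_mono[OF _ VHs] fV by (simp add: card_Pow)
    also have "(2::nat)^card V \<le> ?M" by (intro power_increasing) auto
    finally have c2: "card VH \<le> ?M" .
    show "x \<in> (\<lambda>(p,q). real p / real q) ` ({..?M} \<times> {..?M})"
      using c1 c2 x by (intro image_eqI[where x="(card (edges VH EH), card VH)"]) auto
  qed
  then have "finite ?S" by (rule finite_subset) auto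
  moreover have "real (card (edges VH EH)) / real (card VH) \<in> ?S" using m by blast
  ultimately show ?thesis unfolding nabla1B_def by (rule Max_ge)
qed

lemma alpha_props:
  assumes "finite H"
  shows "\<exists>I. independent H EH I \<and> card I = alpha H EH" and "alpha H EH \<le> card H"
proof -
  let ?S = "{card I | I. independent H EH I}"
  have sub: "?S \<subseteq> {..card H}"
    using assms unfolding independent_def by (auto intro: card_mono)
  then have fin: "finite ?S" by (rule finite_subset) auto
  have ne: "?S \<noteq> {}" unfolding independent_def by auto
  have "alpha H EH \<in> ?S" unfolding alpha_def using fin ne by (rule Max_in)
  then show "\<exists>I. independent H EH I \<and> card I = alpha H EH" by auto
  show "alpha H EH \<le> card H" using \<open>alpha H EH \<in> ?S\<close> sub by auto
qed

lemma hall_ge: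
  assumes fV: "finite V" and sg: "subgraph H EH V E" and ne: "H \<noteq> {}"
  shows "real (card H) / real (alpha H EH) \<le> hall_ratio V E"
proof -
  let ?M = "card V"
  let ?S = "{real (card H) / real (alpha H EH) | H EH.
       subgraph H EH V E \<and> H \<noteq> {}}"
  have "?S \<subseteq> (\<lambda>(p,q). real p / real q) ` ({..?M} \<times> {..?M})"
  proof
    fix x assume "x \<in> ?S"
    then obtain H EH where x: "x = real (card H) / real (alpha H EH)"
      and sm: "subgraph H EH V E" by blast
    have Hs: "H \<subseteq> V" using sm unfolding subgraph_def by blast
    have c1: "card H \<le> ?M" using card_mono[OF fV Hs] .
    have "alpha H EH \<le> card H" using alpha_props(2) finite_subset[OF Hs fV] by blast
    then have c2: "alpha H EH \<le> ?M" using c1 by linarith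
    show "x \<in> (\<lambda>(p,q). real p / real q) ` ({..?M} \<times> {..?M})"
      using c1 c2 x by (intro image_eqI[where x="(card H, alpha H EH)"]) auto
  qed
  then have "finite ?S" by (rule finite_subset) auto
  moreover have "real (card H) / real (alpha H EH) \<in> ?S" using sg ne by blast
  ultimately show ?thesis unfolding hall_ratio_def by (rule Max_ge)
qed


lemma K3t_lemma:
  assumes G: "simple_graph V E" and vz: "v \<noteq> z" "v \<in> V" "z \<in> V"
    and C: "C \<subseteq> nbhd V E v \<inter> nbhd V E z" and cC: "k * t + 1 \<le> card C"
    and A: "finite A" "card A \<le> k" "v \<notin> A" "z \<notin> A" "A \<subseteq> V"
    and cov: "C \<subseteq> cnbhd_set V E A"
  shows "contains_K3t V E t"
proof -
  have fV: "finite V" using G unfolding simple_graph_def by blast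
  have CV: "C \<subseteq> V" using C unfolding nbhd_def by blast
  have fC: "finite C" using finite_subset[OF CV fV] .
  have "\<exists>a\<in>A. card (C \<inter> cnbhd V E a) \<ge> t + 1"
  proof (rule ccontr)
    assume "\<not> ?thesis"
    then have le: "\<And>a. a \<in> A \<Longrightarrow> card (C \<inter> cnbhd V E a) \<le> t" by force
    have "C = (\<Union>a\<in>A. C \<inter> cnbhd V E a)" using cov unfolding cnbhd_set_def by blast
    then have "card C \<le> (\<Sum>a\<in>A. card (C \<inter> cnbhd V E a))"
      by (metis card_UN_le[OF A(1)])
    also have "\<dots> \<le> (\<Sum>a\<in>A. t)" using le by (intro sum_mono) auto
    also have "\<dots> = card A * t" by simp
    also have "\<dots> \<le> k * t" using A(2) by simp
    finally show False using cC by linarith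
  qed
  then obtain a where aA: "a \<in> A" and ca: "card (C \<inter> cnbhd V E a) \<ge> t + 1" by blast
  let ?C' = "C \<inter> cnbhd V E a - {a}"
  have "card ?C' \<ge> t" using ca fC by (auto simp add: card_Diff_singleton_if)
  then obtain B where B: "B \<subseteq> ?C'" "card B = t"
    by (meson obtain_subset_with_card_n)
  have av: "a \<noteq> v" "a \<noteq> z" using aA A by auto
  show ?thesis unfolding contains_K3t_def
  proof (rule exI[of _ "{v,z,a}"], rule exI[of _ B], intro conjI)
    show "{v,z,a} \<subseteq> V" using vz aA A by auto
    show "B \<subseteq> V" using B CV by auto
    show "{v, z, a} \<inter> B = {}" using B C G av unfolding nbhd_def simple_graph_def by blast
    show "card {v,z,a} = 3" using vz av by auto
    show "card B = t" by fact
    show "\<forall>x\<in>{v, z, a}. \<forall>b\<in>B. E x b" using B C unfolding nbhd_def cnbhd_def by auto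
  qed
qed


lemma minor_bound:
  assumes G: "simple_graph V E" and Ddom: "dominating_set V E D"
    and I: "I \<subseteq> V" "I \<inter> D = {}" "\<forall>x\<in>I. \<forall>y\<in>I. \<not> E x y" "I \<noteq> {}"
    and big: "\<forall>v\<in>I. \<forall>A. A \<subseteq> D \<and> nbhd V E v \<subseteq> cnbhd_set V E A \<longrightarrow> 2 * Nb \<le> int (card A)"
    and nab: "nabla1B V E < real_of_int Nb" and Nb1: "Nb \<ge> 1"
  shows "card I < card D"
proof -
  have fV: "finite V" and Esym: "\<And>x y. E x y \<Longrightarrow> x \<in> V \<and> y \<in> V \<and> x \<noteq> y \<and> E y x"
    using G unfolding simple_graph_def by blast+
  have DV: "D \<subseteq> V" and cov: "cnbhd_set V E D = V" using Ddom unfolding dominating_set_def by auto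
  have fD: "finite D" using finite_subset[OF DV fV] .
  have fI: "finite I" using finite_subset[OF I(1) fV] .
  have domx: "\<exists>d. d \<in> D \<and> E d u" if "u \<in> V - D" for u
  proof -
    have "u \<in> cnbhd_set V E D" using cov that by blast
    then show ?thesis using that unfolding cnbhd_set_def cnbhd_def nbhd_def by auto
  qed
  define f where "f u = (SOME d. d \<in> D \<and> E d u)" for u
  have f: "f u \<in> D \<and> E (f u) u" if "u \<in> V - D" for u
    unfolding f_def using someI_ex[OF domx[OF that]] .
  define S where "S d = insert d {u \<in> V - (I \<union> D). f u = d}" for d
  define L where "L = (\<lambda>v. {v}) ` I"
  define R where "R = S ` D"
  define VH where "VH = L \<union> R"
  define EH where "EH X Y = (((X \<in> L \<and> Y \<in> R) \<or> (X \<in> R \<and> Y \<in> L)) \<and> (\<exists>x\<in>X. \<exists>y\<in>Y. E x y))" for X Y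
  have LR: "L \<inter> R = {}"
  proof -
    have "{v} \<noteq> S d" if "v \<in> I" "d \<in> D" for v d
      using that I(2) unfolding S_def by auto
    then show ?thesis unfolding L_def R_def by auto
  qed
  have injS: "inj_on S D"
  proof (rule inj_onI)
    fix d d' assume "d \<in> D" "d' \<in> D" "S d = S d'"
    then have "d \<in> S d'" unfolding S_def by auto
    then show "d = d'" using \<open>d \<in> D\<close> unfolding S_def by auto
  qed
  have cardL: "card L = card I" unfolding L_def by (rule card_image) (auto intro: inj_onI)
  have cardR: "card R = card D" unfolding R_def by (rule card_image[OF injS])
  have fL: "finite L" and fR: "finite R" unfolding L_def R_def using fI fD by auto
  have fVH: "finite VH" unfolding VH_def using fL fR by auto
  have cardVH: "card VH = card I + card D"
    unfolding VH_def using card_Un_disjoint[OF fL fR LR] cardL cardR by simp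
  have Sd: "S d \<subseteq> cnbhd V E d" "S d \<subseteq> V" if "d \<in> D" for d
    using f that DV unfolding S_def cnbhd_def nbhd_def by auto
  have minor: "shallow1_minor V E VH EH"
    unfolding shallow1_minor_def
  proof (intro conjI)
    show "simple_graph VH EH" unfolding simple_graph_def
    proof (rule conjI[OF fVH], intro allI impI)
      fix X Y assume "EH X Y"
      then show "X \<in> VH \<and> Y \<in> VH \<and> X \<noteq> Y \<and> EH Y X"
        using LR Esym unfolding EH_def VH_def by blast
    qed
    show "disjoint VH"
    proof (rule disjointI)
      fix X Y assume XY: "X \<in> VH" "Y \<in> VH" "X \<noteq> Y"
      show "X \<inter> Y = {}"
      proof (cases "X \<in> L")
        case True
        then obtain v where v: "X = {v}" "v \<in> I" unfolding L_def by auto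
        show ?thesis
        proof (cases "Y \<in> L")
          case True then show ?thesis using v XY unfolding L_def by auto
        next
          case False
          then obtain d where "Y = S d" "d \<in> D" using XY unfolding VH_def R_def by auto
          then show ?thesis using v I(2) unfolding S_def by auto
        qed
      next
        case False
        then obtain d where d: "X = S d" "d \<in> D" using XY unfolding VH_def R_def by auto
        show ?thesis
        proof (cases "Y \<in> L")
          case True
          then obtain v where v: "Y = {v}" "v \<in> I" unfolding L_def by auto
          then show ?thesis using d I(2) unfolding S_def by auto
        next
          case False
          then obtain d' where d': "Y = S d'" "d' \<in> D" using XY unfolding VH_def R_def by auto
          then have "d \<noteq> d'" using d XY by auto
          then show ?thesis using d d' unfolding S_def by auto
        qed
      qed
    qed
    show "\<forall>X\<in>VH. X \<noteq> {} \<and> X \<subseteq> V \<and> (\<exists>c\<in>X. X \<subseteq> cnbhd V E c)"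
    proof
      fix X assume "X \<in> VH"
      then show "X \<noteq> {} \<and> X \<subseteq> V \<and> (\<exists>c\<in>X. X \<subseteq> cnbhd V E c)"
      proof (cases "X \<in> L")
        case True
        then obtain v where v: "X = {v}" "v \<in> I" unfolding L_def by auto
        then show ?thesis using I(1) unfolding cnbhd_def by auto
      next
        case False
        then obtain d where d: "X = S d" "d \<in> D" using \<open>X \<in> VH\<close> unfolding VH_def R_def by auto
        then show ?thesis using Sd[OF d(2)] unfolding S_def by auto
      qed
    qed
    show "\<forall>X Y. EH X Y \<longrightarrow> (\<exists>x\<in>X. \<exists>y\<in>Y. E x y)" unfolding EH_def by blast
  qed
  have bip: "bipartite VH EH" unfolding bipartite_def
    by (rule exI[of _ L]) (use LR in \<open>auto simp: VH_def EH_def\<close>)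
  have neVH: "VH \<noteq> {}" using I(4) unfolding VH_def L_def by auto
  define A' where "A' v = {d \<in> D. \<exists>x\<in>S d. E v x}" for v
  have Abig: "2 * Nb \<le> int (card (A' v))" if v: "v \<in> I" for v
  proof -
    have "nbhd V E v \<subseteq> cnbhd_set V E (A' v)"
    proof
      fix u assume u: "u \<in> nbhd V E v"
      then have uV: "u \<in> V" and Evu: "E v u" unfolding nbhd_def by auto
      have uI: "u \<notin> I" using I(3) v Evu by blast
      show "u \<in> cnbhd_set V E (A' v)"
      proof (cases "u \<in> D")
        case True
        then have "u \<in> A' v" unfolding A'_def S_def using Evu by auto
        then show ?thesis unfolding cnbhd_set_def cnbhd_def by auto
      next
        case False
        then have fu: "f u \<in> D" "E (f u) u" using f uV by auto
        then have "u \<in> S (f u)" unfolding S_def using uV uI False by auto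
        then have "f u \<in> A' v" unfolding A'_def using fu Evu by auto
        moreover have "u \<in> cnbhd V E (f u)" using fu uV unfolding cnbhd_def nbhd_def by auto
        ultimately show ?thesis unfolding cnbhd_set_def by auto
      qed
    qed
    moreover have "A' v \<subseteq> D" unfolding A'_def by auto
    ultimately show ?thesis using big v by blast
  qed
  let ?g = "\<lambda>(v,d). {{v}, S d}"
  have inj: "inj_on ?g (Sigma I A')"
  proof (rule inj_onI, clarify)
    fix v d v' d' assume a: "v \<in> I" "d \<in> A' v" "v' \<in> I" "d' \<in> A' v'" "{{v}, S d} = {{v'}, S d'}"
    have dD: "d \<in> D" "d' \<in> D" using a unfolding A'_def by auto
    have ne1: "{v} \<noteq> S d'" "{v'} \<noteq> S d" using LR a dD unfolding L_def R_def by auto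
    from a(5) have "{v} = {v'} \<and> S d = S d'" using ne1 by (auto simp: doubleton_eq_iff)
    then show "v = v' \<and> d = d'" using injS dD by (auto dest: inj_onD)
  qed
  have img: "?g ` Sigma I A' \<subseteq> edges VH EH"
  proof clarify
    fix v d assume a: "v \<in> I" "d \<in> A' v"
    then obtain x where x: "d \<in> D" "x \<in> S d" "E v x" unfolding A'_def by auto
    have "{v} \<in> L" "S d \<in> R" using a x unfolding L_def R_def by auto
    then have "EH {v} (S d)" unfolding EH_def using x by auto
    then show "{{v}, S d} \<in> edges VH EH" unfolding edges_def
      using \<open>{v} \<in> L\<close> \<open>S d \<in> R\<close> unfolding VH_def by blast
  qed
  have fE: "finite (edges VH EH)"
    by (rule finite_subset[of _ "Pow VH"]) (use fVH in \<open>auto simp: edges_def\<close>)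
  have fA': "\<And>v. finite (A' v)" unfolding A'_def using fD by auto
  have "(\<Sum>v\<in>I. card (A' v)) = card (Sigma I A')" using card_SigmaI[OF fI, of A'] fA' by simp
  also have "\<dots> = card (?g ` Sigma I A')" using card_image[OF inj] by simp
  also have "\<dots> \<le> card (edges VH EH)" using card_mono[OF fE img] .
  finally have e1: "(\<Sum>v\<in>I. card (A' v)) \<le> card (edges VH EH)" .
  have "2 * Nb * int (card I) = (\<Sum>v\<in>I. 2 * Nb)" by simp
  also have "\<dots> \<le> (\<Sum>v\<in>I. int (card (A' v)))" using Abig by (intro sum_mono) auto
  also have "\<dots> = int (\<Sum>v\<in>I. card (A' v))" by simp
  also have "\<dots> \<le> int (card (edges VH EH))" using e1 by (simp only: of_nat_le_iff)
  finally have e2: "2 * Nb * int (card I) \<le> int (card (edges VH EH))" .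
  have "real (card (edges VH EH)) / real (card VH) \<le> nabla1B V E"
    using nabla_ge[OF fV minor bip neVH] .
  then have "real (card (edges VH EH)) / real (card VH) < real_of_int Nb" using nab by linarith
  moreover have "card VH > 0" using fVH neVH by (simp add: card_gt_0_iff)
  ultimately have "real (card (edges VH EH)) < real_of_int Nb * real (card VH)"
    by (simp add: divide_less_eq)
  then have "real_of_int (int (card (edges VH EH))) < real_of_int (Nb * int (card VH))" by simp
  then have "int (card (edges VH EH)) < Nb * int (card VH)" by (simp only: of_int_less_iff)
  with e2 cardVH have "2 * Nb * int (card I) < Nb * (int (card I) + int (card D))" by simp
  then have "Nb * int (card I) < Nb * int (card D)" by (simp add: algebra_simps)
  then have "int (card I) < int (card D)" using Nb1 by (simp add: mult_less_cancel_left)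
  then show ?thesis by simp
qed


lemma alpha_ge:
  assumes "finite H" "independent H EH I"
  shows "card I \<le> alpha H EH"
proof -
  let ?S = "{card I | I. independent H EH I}"
  have sub: "?S \<subseteq> {..card H}"
    using assms unfolding independent_def by (auto intro: card_mono)
  then have fin: "finite ?S" by (rule finite_subset) auto
  show ?thesis unfolding alpha_def using assms(2) by (intro Max_ge[OF fin]) auto
qed

theorem lemma34:
  fixes V :: "'a set" and E :: "'a \<Rightarrow> 'a \<Rightarrow> bool" and t :: nat
    and D :: "'a set" and \<gamma> :: nat and Nb :: int and \<eta> :: real
    and D1 R1 D2 W :: "'a set" and NR1 B :: "'a \<Rightarrow> 'a set"
  assumes G: "simple_graph V E" and nonempty: "V \<noteq> {}"
    and t3: "t \<ge> 3"
    and noK: "\<not> contains_K3t V E t"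
    and Dmin: "min_dominating_set V E D" and gamma: "\<gamma> = card D"
    and nabla: "real_of_int Nb > nabla1B V E"
    and D1_def: "D1 = {v \<in> V. \<forall>A. A \<subseteq> V - {v} \<and> nbhd V E v \<subseteq> cnbhd_set V E A
                         \<longrightarrow> int (card A) > 2 * Nb - 1}"
    and R1_def: "R1 = V - cnbhd_set V E D1"
    and NR1_def: "\<And>v. NR1 v = nbhd V E v \<inter> R1"
    and B_def: "\<And>v. B v = {z \<in> V - {v}.
                   int (card (NR1 v \<inter> NR1 z)) \<ge> (2 * Nb - 1) * int t + 1}"
    and W_def: "W = {v \<in> V. B v \<noteq> {}}"
    and D2_def: "D2 = (\<Union>v\<in>W. insert v (B v))"
    and eta: "0 \<le> \<eta>" "\<eta> \<le> 1"
    and eta_eq: "real (card ((D1 \<union> D2) \<inter> D)) = \<eta> * real \<gamma>"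
  shows "real (card (D1 \<union> D2)) < hall_ratio V E * real \<gamma> + 2 * real_of_int Nb * \<eta> * real \<gamma>"
proof -
  have fV: "finite V" and Esym: "\<And>x y. E x y \<Longrightarrow> x \<in> V \<and> y \<in> V \<and> x \<noteq> y \<and> E y x"
    using G unfolding simple_graph_def by blast+
  have Ddom: "dominating_set V E D" using Dmin unfolding min_dominating_set_def by blast
  have DV: "D \<subseteq> V" and cov: "cnbhd_set V E D = V" using Ddom unfolding dominating_set_def by auto
  have fD: "finite D" using finite_subset[OF DV fV] .
  have Dne: "D \<noteq> {}" using cov nonempty unfolding cnbhd_set_def by auto
  have gpos: "\<gamma> > 0" using gamma fD Dne by (simp add: card_gt_0_iff)
  obtain v0 where v0: "v0 \<in> V" using nonempty by blast
  have Nb1: "Nb \<ge> 1"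
  proof -
    have m: "shallow1_minor V E {{v0}} (\<lambda>_ _. False)"
      unfolding shallow1_minor_def simple_graph_def cnbhd_def using v0 by (auto simp: disjoint_def)
    have b: "bipartite {{v0}} (\<lambda>_ _. False)" unfolding bipartite_def by auto
    have "edges {{v0}} (\<lambda>_ _. False) = {}" unfolding edges_def by auto
    then have "0 \<le> nabla1B V E" using nabla_ge[OF fV m b] by simp
    then have "real_of_int Nb > 0" using nabla by linarith
    then show ?thesis by simp
  qed
  define k where "k = nat (2 * Nb - 1)"
  have kdef: "int k = 2 * Nb - 1" using Nb1 unfolding k_def by simp
  have pC: "v \<in> V \<and> z \<in> V \<and> v \<noteq> z \<and> NR1 v \<inter> NR1 z \<subseteq> nbhd V E v \<inter> nbhd V E z
      \<and> k * t + 1 \<le> card (NR1 v \<inter> NR1 z) \<and> NR1 v \<inter> NR1 z \<subseteq> R1 \<and> NR1 v \<inter> NR1 z \<noteq> {}"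
    if zB: "z \<in> B v" for v z
  proof -
    have z: "z \<in> V" "z \<noteq> v" and c: "int (card (NR1 v \<inter> NR1 z)) \<ge> (2 * Nb - 1) * int t + 1"
      using zB B_def[of v] by auto
    have "int (k * t + 1) \<le> int (card (NR1 v \<inter> NR1 z))" using c kdef by simp
    then have c2: "k * t + 1 \<le> card (NR1 v \<inter> NR1 z)" by linarith
    then have ne: "NR1 v \<inter> NR1 z \<noteq> {}" by auto
    then obtain c where "c \<in> NR1 v" by blast
    then have "v \<in> V" using NR1_def[of v] Esym unfolding nbhd_def by blast
    then show ?thesis using z c2 ne NR1_def[of v] NR1_def[of z] by auto
  qed
  have psym: "v \<in> B z" if "z \<in> B v" for v z
    using pC[OF that] that B_def[of v] B_def[of z] by (auto simp: Int_commute)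
  have notD1: "z \<notin> D1" if vzB: "v \<in> B z" for v z
  proof
    assume zD1: "z \<in> D1"
    obtain c where c: "c \<in> NR1 z \<inter> NR1 v" using pC[OF vzB] by blast
    then have "c \<in> R1" "E z c" using NR1_def[of z] unfolding nbhd_def by auto
    moreover have "c \<in> cnbhd_set V E D1" using zD1 \<open>E z c\<close> Esym
      unfolding cnbhd_set_def cnbhd_def nbhd_def by blast
    ultimately show False using R1_def by auto
  qed
  have Bsmall: "card (B z) \<le> k" if zh: "z \<in> D" "B z \<noteq> {}" for z
  proof -
    obtain v where "v \<in> B z" using zh by blast
    have zV: "z \<in> V" using zh DV by auto
    obtain A where A: "A \<subseteq> V - {z}" "nbhd V E z \<subseteq> cnbhd_set V E A" "\<not> int (card A) > 2 * Nb - 1"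
      using notD1[OF \<open>v \<in> B z\<close>] zV D1_def by auto
    have fA: "finite A" using finite_subset[OF _ fV] A(1) by auto
    have cA: "card A \<le> k" using A(3) kdef by linarith
    have "B z \<subseteq> A"
    proof
      fix u assume u: "u \<in> B z"
      show "u \<in> A"
      proof (rule ccontr)
        assume "u \<notin> A"
        have p: "z \<in> V" "u \<in> V" "z \<noteq> u" "NR1 z \<inter> NR1 u \<subseteq> nbhd V E z \<inter> nbhd V E u"
          "k * t + 1 \<le> card (NR1 z \<inter> NR1 u)" using pC[OF u] by auto
        have "contains_K3t V E t"
          by (rule K3t_lemma[OF G p(3,1,2,4,5) fA cA _ \<open>u \<notin> A\<close>])
             (use A p(4) in auto)
        then show False using noK by blast
      qed
    qed
    then show ?thesis using card_mono[OF fA] cA by (meson le_trans)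
  qed
  define X where "X = D1 \<union> D2"
  have XV: "X \<subseteq> V" unfolding X_def D1_def D2_def W_def using B_def by auto
  have fX: "finite X" using finite_subset[OF XV fV] .
  define Good where "Good = {v \<in> X - D. v \<in> D1 \<or> (\<exists>z\<in>B v. z \<notin> D)}"
  define Bad where "Bad = X - D - Good"
  define Z where "Z = {z \<in> X \<inter> D. B z \<noteq> {}}"
  have badsub: "Bad \<subseteq> (\<Union>z\<in>Z. B z)"
  proof
    fix v assume vB: "v \<in> Bad"
    then have vX: "v \<in> X" "v \<notin> D" "v \<notin> D1" and ng: "\<forall>z\<in>B v. z \<in> D"
      unfolding Bad_def Good_def by auto
    then have "v \<in> D2" unfolding X_def by auto
    then obtain w where w: "w \<in> W" "v \<in> insert w (B w)" unfolding D2_def by auto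
    obtain z where z: "z \<in> B v"
    proof (cases "v = w")
      case True then show ?thesis using w that unfolding W_def by auto
    next
      case False then show ?thesis using w that psym by auto
    qed
    have zD: "z \<in> D" using ng z by auto
    have vz: "v \<in> B z" using psym[OF z] .
    have "z \<in> W" unfolding W_def using vz zD DV by auto
    then have "z \<in> X" unfolding X_def D2_def by auto
    then have "z \<in> Z" unfolding Z_def using zD vz by auto
    then show "v \<in> (\<Union>z\<in>Z. B z)" using vz by auto
  qed
  have fZ: "finite Z" unfolding Z_def using fX by auto
  have cBad: "card Bad \<le> k * card (X \<inter> D)"
  proof -
    have fB: "\<And>z. z \<in> Z \<Longrightarrow> finite (B z)" using B_def fV by auto
    have "card Bad \<le> card (\<Union>z\<in>Z. B z)" using card_mono[OF _ badsub] fZ fB by auto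
    also have "\<dots> \<le> (\<Sum>z\<in>Z. card (B z))" by (rule card_UN_le[OF fZ])
    also have "\<dots> \<le> (\<Sum>z\<in>Z. k)" using Bsmall by (intro sum_mono) (auto simp: Z_def)
    also have "\<dots> = k * card Z" by simp
    also have "\<dots> \<le> k * card (X \<inter> D)" using card_mono[of "X \<inter> D" Z] fX unfolding Z_def by auto
    finally show ?thesis .
  qed
  define ES where "ES S = (\<lambda>x y. E x y \<and> x \<in> S \<and> y \<in> S)" for S
  have sgS: "subgraph S (ES S) V E" if "S \<subseteq> V" for S
    unfolding subgraph_def simple_graph_def ES_def using that fV Esym finite_subset by blast
  have alpha1: "alpha S (ES S) \<ge> 1" if Sh: "S \<subseteq> V" "S \<noteq> {}" for S
  proof -
    obtain s where "s \<in> S" using Sh by blast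
    have "independent S (ES S) {s}" unfolding independent_def ES_def using \<open>s \<in> S\<close> Esym by auto
    then have "card {s} \<le> alpha S (ES S)" using alpha_ge finite_subset[OF Sh(1) fV] by blast
    then show ?thesis by simp
  qed
  have rho_pos: "hall_ratio V E > 0"
  proof -
    have "real (card V) / real (alpha V (ES V)) \<le> hall_ratio V E"
      using hall_ge[OF fV sgS nonempty] by simp
    moreover have "card V > 0" using fV nonempty by (simp add: card_gt_0_iff)
    moreover have "alpha V (ES V) \<ge> 1" using alpha1 nonempty by blast
    ultimately show ?thesis
      by (smt (verit, del_insts) divide_pos_pos of_nat_0_less_iff less_le_trans zero_less_one)
  qed
  have cGood: "real (card Good) < hall_ratio V E * real \<gamma>"
  proof (cases "Good = {}")
    case True then show ?thesis using rho_pos gpos by simp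
  next
    case False
    have GV: "Good \<subseteq> V" using XV unfolding Good_def by auto
    have fG: "finite Good" using finite_subset[OF GV fV] .
    obtain I0 where I0: "independent Good (ES Good) I0" "card I0 = alpha Good (ES Good)"
      using alpha_props(1)[OF fG] by blast
    have I0G: "I0 \<subseteq> Good" and I0i: "\<forall>x\<in>I0. \<forall>y\<in>I0. \<not> E x y"
      using I0(1) unfolding independent_def ES_def by auto
    have a1: "card I0 \<ge> 1" using I0(2) alpha1[OF GV False] by simp
    then have I0ne: "I0 \<noteq> {}" by auto
    have big: "\<forall>v\<in>I0. \<forall>A. A \<subseteq> D \<and> nbhd V E v \<subseteq> cnbhd_set V E A \<longrightarrow> 2 * Nb \<le> int (card A)"
    proof (intro ballI allI impI)
      fix v A assume v: "v \<in> I0" and A: "A \<subseteq> D \<and> nbhd V E v \<subseteq> cnbhd_set V E A"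
      have vG: "v \<in> Good" using v I0G by auto
      then have vnD: "v \<notin> D" and vV: "v \<in> V" using GV unfolding Good_def by auto
      show "2 * Nb \<le> int (card A)"
      proof (cases "v \<in> D1")
        case True
        have "A \<subseteq> V - {v}" using A DV vnD by auto
        then have "int (card A) > 2 * Nb - 1" using True A D1_def by auto
        then show ?thesis by linarith
      next
        case False
        then obtain z where z: "z \<in> B v" "z \<notin> D" using vG unfolding Good_def by auto
        show ?thesis
        proof (rule ccontr)
          assume "\<not> ?thesis"
          then have cA: "card A \<le> k" using kdef by linarith
          have fA: "finite A" using finite_subset[OF _ fD] A by auto
          have p: "v \<in> V" "z \<in> V" "v \<noteq> z" "NR1 v \<inter> NR1 z \<subseteq> nbhd V E v \<inter> nbhd V E z"
            "k * t + 1 \<le> card (NR1 v \<inter> NR1 z)" using pC[OF z(1)] by auto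
          have "contains_K3t V E t"
            by (rule K3t_lemma[OF G p(3,1,2,4,5) fA cA])
               (use A vnD z(2) DV p(4) in auto)
          then show False using noK by blast
        qed
      qed
    qed
    have I0V: "I0 \<subseteq> V" using I0G GV by auto
    have I0D: "I0 \<inter> D = {}" using I0G unfolding Good_def by auto
    have "card I0 < card D" by (rule minor_bound[OF G Ddom I0V I0D I0i I0ne big nabla Nb1])
    then have lt: "real (alpha Good (ES Good)) \<le> real \<gamma> - 1" using I0(2) gamma by simp
    have "real (card Good) / real (alpha Good (ES Good)) \<le> hall_ratio V E"
      using hall_ge[OF fV sgS[OF GV] False] .
    moreover have apos: "real (alpha Good (ES Good)) > 0" using a1 I0(2) by simp
    ultimately have "real (card Good) \<le> hall_ratio V E * real (alpha Good (ES Good))"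
      by (simp add: divide_le_eq)
    also have "\<dots> \<le> hall_ratio V E * (real \<gamma> - 1)"
      using lt rho_pos by (intro mult_left_mono) auto
    also have "\<dots> < hall_ratio V E * real \<gamma>" using rho_pos by (simp add: algebra_simps)
    finally show ?thesis .
  qed
  have "X - D = Good \<union> Bad" unfolding Bad_def Good_def by auto
  then have c1: "card (X - D) \<le> card Good + card Bad" by (metis card_Un_le)
  have c2: "card X = card (X \<inter> D) + card (X - D)"
    using fX by (metis Int_Diff_disjoint Int_Diff_Un card_Un_disjoint finite_Diff finite_Int)
  have "real (card X) \<le> real (card (X \<inter> D)) + real (card Good) + real k * real (card (X \<inter> D))"
    using c1 c2 cBad by (simp add: of_nat_mult[symmetric] del: of_nat_mult)
  also have "\<dots> < hall_ratio V E * real \<gamma> + (1 + real k) * real (card (X \<inter> D))"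
    using cGood by (simp add: algebra_simps)
  also have "1 + real k = 2 * real_of_int Nb"
    using kdef by (metis of_int_of_nat_eq of_int_diff of_int_mult of_int_numeral of_int_1 add.commute diff_add_cancel)
  finally show ?thesis using eta_eq unfolding X_def by (simp add: mult.assoc)
qed

end
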